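(* Let $G$ be a split graph with vertex set partitioned as $I^*\cup K$, where $K$ is a clique and $I^*$ is an independent set with $|I^*|=\alpha(G)$, and let $H$ be a graph. Then $\gamma_{gr}(G\circ H)= |I^*|\gamma_{gr}(H)+n(G)$.
   Context: $\alpha(G)$ is the independence number and $N(v)$ the open neighborhood. $n(G)=1$ if there exist $v,w\in K$ with $N(v)\cap N(w)\cap I^*=\emptyset$, and $n(G)=0$ otherwise. The lexicographic product $G\circ H$ has vertex set $V(G)\times V(H)$, with $(g_1,h_1)$ adjacent to $(g_2,h_2)$ iff $g_1g_2\in E(G)$, or $g_1=g_2$ and $h_1h_2\in E(H)$. $\gamma_{gr}$ is the Grundy domination number: the maximum length of a sequence $(v_1,\dots,v_k)$ of distinct vertices whose set is dominating and such that each $N[v_i]\setminus\bigcup_{j<i}N[v_j]$ is non-empty ($N[\cdot]$ the closed neighborhood). *)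

theory Defs
  imports Main
begin

definition fin_graph :: "'a set \<Rightarrow> ('a \<Rightarrow> 'a \<Rightarrow> bool) \<Rightarrow> bool" where
  "fin_graph V E \<longleftrightarrow> finite V \<and> (\<forall>x y. E x y \<longrightarrow> x \<in> V \<and> y \<in> V)
     \<and> (\<forall>x y. E x y \<longrightarrow> E y x) \<and> (\<forall>x. \<not> E x x)"

definition open_nbhd :: "'a set \<Rightarrow> ('a \<Rightarrow> 'a \<Rightarrow> bool) \<Rightarrow> 'a \<Rightarrow> 'a set" where
  "open_nbhd V E v = {u \<in> V. E v u}"

definition closed_nbhd :: "'a set \<Rightarrow> ('a \<Rightarrow> 'a \<Rightarrow> bool) \<Rightarrow> 'a \<Rightarrow> 'a set" where
  "closed_nbhd V E v = insert v (open_nbhd V E v)"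

definition indep_set :: "'a set \<Rightarrow> ('a \<Rightarrow> 'a \<Rightarrow> bool) \<Rightarrow> 'a set \<Rightarrow> bool" where
  "indep_set V E S \<longleftrightarrow> S \<subseteq> V \<and> (\<forall>x\<in>S. \<forall>y\<in>S. \<not> E x y)"

definition clique :: "'a set \<Rightarrow> ('a \<Rightarrow> 'a \<Rightarrow> bool) \<Rightarrow> 'a set \<Rightarrow> bool" where
  "clique V E S \<longleftrightarrow> S \<subseteq> V \<and> (\<forall>x\<in>S. \<forall>y\<in>S. x \<noteq> y \<longrightarrow> E x y)"

definition alpha :: "'a set \<Rightarrow> ('a \<Rightarrow> 'a \<Rightarrow> bool) \<Rightarrow> nat" where
  "alpha V E = Max {card S | S. indep_set V E S}"

definition grundy_dom_seq :: "'a set \<Rightarrow> ('a \<Rightarrow> 'a \<Rightarrow> bool) \<Rightarrow> 'a list \<Rightarrow> bool" where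
  "grundy_dom_seq V E vs \<longleftrightarrow> distinct vs \<and> set vs \<subseteq> V
     \<and> (\<Union>v\<in>set vs. closed_nbhd V E v) = V
     \<and> (\<forall>i < length vs. closed_nbhd V E (vs ! i)
            - (\<Union>j<i. closed_nbhd V E (vs ! j)) \<noteq> {})"

definition grundy_dom_num :: "'a set \<Rightarrow> ('a \<Rightarrow> 'a \<Rightarrow> bool) \<Rightarrow> nat" where
  "grundy_dom_num V E = Max {length vs | vs. grundy_dom_seq V E vs}"

definition lex_vertices :: "'a set \<Rightarrow> 'b set \<Rightarrow> ('a \<times> 'b) set" where
  "lex_vertices VG VH = VG \<times> VH"

definition lex_edges :: "('a \<Rightarrow> 'a \<Rightarrow> bool) \<Rightarrow> 'b set \<Rightarrow> ('b \<Rightarrow> 'b \<Rightarrow> bool)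
    \<Rightarrow> ('a \<times> 'b) \<Rightarrow> ('a \<times> 'b) \<Rightarrow> bool" where
  "lex_edges EG VH EH p q \<longleftrightarrow> snd p \<in> VH \<and> snd q \<in> VH \<and>
     (EG (fst p) (fst q) \<or> (fst p = fst q \<and> EH (snd p) (snd q)))"

definition split_n :: "'a set \<Rightarrow> ('a \<Rightarrow> 'a \<Rightarrow> bool) \<Rightarrow> 'a set \<Rightarrow> 'a set \<Rightarrow> nat" where
  "split_n V E I K = (if \<exists>v\<in>K. \<exists>w\<in>K. open_nbhd V E v \<inter> open_nbhd V E w \<inter> I = {}
                      then 1 else 0)"

end

theory Submission
  imports Defs
begin

definition legal :: "'a set \<Rightarrow> ('a \<Rightarrow> 'a \<Rightarrow> bool) \<Rightarrow> 'a list \<Rightarrow> bool" where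
  "legal V E vs \<longleftrightarrow> distinct vs \<and> set vs \<subseteq> V
     \<and> (\<forall>i < length vs. closed_nbhd V E (vs ! i)
            - (\<Union>j<i. closed_nbhd V E (vs ! j)) \<noteq> {})"

lemma grundy_iff: "grundy_dom_seq V E vs \<longleftrightarrow> legal V E vs \<and> (\<Union>v\<in>set vs. closed_nbhd V E v) = V"
  unfolding grundy_dom_seq_def legal_def by blast

lemma self_in_cn: "v \<in> closed_nbhd V E v"
  by (simp add: closed_nbhd_def)

lemma cn_sub: "v \<in> V \<Longrightarrow> closed_nbhd V E v \<subseteq> V"
  by (auto simp: closed_nbhd_def open_nbhd_def)

lemma UN_nth: "(\<Union>j<length xs. f (xs ! j)) = (\<Union>v\<in>set xs. f v)"
  by (auto simp: set_conv_nth)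

lemma legal_Nil: "legal V E []"
  by (simp add: legal_def)

lemma legal_snoc: "legal V E (xs @ [v]) \<longleftrightarrow> legal V E xs \<and> v \<in> V \<and> v \<notin> set xs \<and>
   closed_nbhd V E v - (\<Union>u\<in>set xs. closed_nbhd V E u) \<noteq> {}"
proof -
  define F' where "F' i = (closed_nbhd V E ((xs@[v]) ! i) - (\<Union>j<i. closed_nbhd V E ((xs@[v]) ! j)) \<noteq> {})" for i
  define F where "F i = (closed_nbhd V E (xs ! i) - (\<Union>j<i. closed_nbhd V E (xs ! j)) \<noteq> {})" for i
  have A: "(\<forall>i < length (xs@[v]). F' i) \<longleftrightarrow> (\<forall>i<length xs. F' i) \<and> F' (length xs)"
    by (auto simp: less_Suc_eq)
  have B: "i < length xs \<Longrightarrow> (\<Union>j<i. closed_nbhd V E ((xs@[v]) ! j)) = (\<Union>j<i. closed_nbhd V E (xs ! j))" for i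
    by (rule SUP_cong) (auto simp: nth_append)
  have B2: "i < length xs \<Longrightarrow> F' i = F i" for i
    unfolding F'_def F_def using B[of i] by (simp add: nth_append)
  have C: "(\<Union>j<length xs. closed_nbhd V E ((xs@[v]) ! j)) = (\<Union>u\<in>set xs. closed_nbhd V E u)"
  proof -
    have "(\<Union>j<length xs. closed_nbhd V E ((xs@[v]) ! j)) = (\<Union>j<length xs. closed_nbhd V E (xs ! j))"
      by (rule SUP_cong) (auto simp: nth_append)
    also have "\<dots> = (\<Union>u\<in>set xs. closed_nbhd V E u)" by (rule UN_nth)
    finally show ?thesis .
  qed
  have C2: "F' (length xs) = (closed_nbhd V E v - (\<Union>u\<in>set xs. closed_nbhd V E u) \<noteq> {})"
    unfolding F'_def using C by simp
  have L1: "legal V E (xs @ [v]) \<longleftrightarrow> distinct (xs@[v]) \<and> set (xs@[v]) \<subseteq> V \<and> (\<forall>i < length (xs@[v]). F' i)"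
    unfolding legal_def F'_def by blast
  have L2: "legal V E xs \<longleftrightarrow> distinct xs \<and> set xs \<subseteq> V \<and> (\<forall>i < length xs. F i)"
    unfolding legal_def F_def by blast
  have L3: "(\<forall>i<length xs. F' i) \<longleftrightarrow> (\<forall>i<length xs. F i)" using B2 by blast
  show ?thesis unfolding L1 L2 A L3 C2 by auto
qed

lemma legal_extend:
  assumes fin: "finite V" and l: "legal V E xs"
  shows "\<exists>ys. grundy_dom_seq V E (xs @ ys)"
proof -
  have "\<And>xs. legal V E xs \<Longrightarrow> card (V - (\<Union>u\<in>set xs. closed_nbhd V E u)) = n \<Longrightarrow> \<exists>ys. grundy_dom_seq V E (xs @ ys)" for n
  proof (induction n rule: less_induct)
    case (less n xs)
    let ?D = "\<Union>u\<in>set xs. closed_nbhd V E u"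
    have sv: "set xs \<subseteq> V" using less.prems(1) by (simp add: legal_def)
    have DV: "?D \<subseteq> V" using sv by (intro UN_least cn_sub) auto
    show ?case
    proof (cases "?D = V")
      case True
      then have "grundy_dom_seq V E (xs @ [])" using less.prems(1) unfolding grundy_iff by simp
      then show ?thesis by blast
    next
      case False
      then obtain v where v: "v \<in> V" "v \<notin> ?D" using DV by blast
      have vx: "v \<notin> set xs" using v(2) self_in_cn[of v V E] by auto
      have l2: "legal V E (xs @ [v])" unfolding legal_snoc using less.prems(1) v vx self_in_cn[of v V E] by auto
      have "card (V - (\<Union>u\<in>set (xs@[v]). closed_nbhd V E u)) < n"
      proof -
        have "V - (\<Union>u\<in>set (xs@[v]). closed_nbhd V E u) \<subset> V - ?D"
        proof
          show "V - (\<Union>u\<in>set (xs@[v]). closed_nbhd V E u) \<subseteq> V - ?D" by auto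
          have "v \<in> V - ?D" using v by blast
          moreover have "v \<notin> V - (\<Union>u\<in>set (xs@[v]). closed_nbhd V E u)" using self_in_cn[of v V E] by auto
          ultimately show "V - (\<Union>u\<in>set (xs@[v]). closed_nbhd V E u) \<noteq> V - ?D" by blast
        qed
        then show ?thesis using less.prems(2) fin by (metis finite_Diff psubset_card_mono)
      qed
      then obtain ys where "grundy_dom_seq V E ((xs @ [v]) @ ys)" using less.IH l2 by blast
      then show ?thesis by (metis append.assoc append_Cons append_Nil)
    qed
  qed
  then show ?thesis using l by blast
qed

lemma gdn_props:
  assumes fin: "finite V"
  shows "grundy_dom_seq V E vs \<Longrightarrow> length vs \<le> grundy_dom_num V E"
    and "\<exists>vs. grundy_dom_seq V E vs \<and> length vs = grundy_dom_num V E"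
proof -
  let ?S = "{length vs | vs. grundy_dom_seq V E vs}"
  have "?S \<subseteq> {..card V}"
  proof
    fix x assume "x \<in> ?S"
    then obtain vs where "x = length vs" "grundy_dom_seq V E vs" by blast
    then have "distinct vs" "set vs \<subseteq> V" by (auto simp: grundy_dom_seq_def)
    then show "x \<in> {..card V}" using \<open>x = length vs\<close> fin
      by (metis atMost_iff card_mono distinct_card)
  qed
  then have f: "finite ?S" by (rule finite_subset) simp
  have ne: "?S \<noteq> {}" using legal_extend[OF fin legal_Nil] by auto
  show "grundy_dom_seq V E vs \<Longrightarrow> length vs \<le> grundy_dom_num V E"
    unfolding grundy_dom_num_def using f by (auto intro: Max_ge)
  show "\<exists>vs. grundy_dom_seq V E vs \<and> length vs = grundy_dom_num V E"
    unfolding grundy_dom_num_def using Max_in[OF f ne] by auto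
qed

lemma legal_le:
  assumes "finite V" "legal V E xs"
  shows "length xs \<le> grundy_dom_num V E"
proof -
  obtain ys where "grundy_dom_seq V E (xs @ ys)" using legal_extend assms by blast
  then have "length (xs @ ys) \<le> grundy_dom_num V E" using gdn_props(1)[OF assms(1)] by blast
  then show ?thesis by simp
qed

lemma gdn_pos:
  assumes "finite V" "V \<noteq> {}"
  shows "1 \<le> grundy_dom_num V E"
proof -
  obtain vs where "grundy_dom_seq V E vs" "length vs = grundy_dom_num V E"
    using gdn_props(2)[OF assms(1)] by blast
  then show ?thesis using assms(2) by (cases vs) (auto simp: grundy_dom_seq_def)
qed

lemma Hbound_legal:
  assumes fJ: "finite (J::nat set)" and inj: "inj_on f J" and fV: "f ` J \<subseteq> V"
    and w: "\<forall>j\<in>J. \<exists>w\<in>closed_nbhd V E (f j). \<forall>j'\<in>J. j' < j \<longrightarrow> w \<notin> closed_nbhd V E (f j')"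
  shows "legal V E (map f (sorted_list_of_set J))"
proof -
  let ?sl = "sorted_list_of_set J"
  have s1: "set ?sl = J" "distinct ?sl" using fJ by auto
  have s2: "sorted_wrt (<) ?sl" by (rule strict_sorted_list_of_set)
  have dist: "distinct (map f ?sl)" using s1 inj by (simp add: distinct_map)
  have sub: "set (map f ?sl) \<subseteq> V" using s1 fV by auto
  have fp: "closed_nbhd V E (map f ?sl ! i) - (\<Union>j<i. closed_nbhd V E (map f ?sl ! j)) \<noteq> {}"
    if i: "i < length (map f ?sl)" for i
  proof -
    have iJ: "?sl ! i \<in> J" using i s1 nth_mem by fastforce
    obtain w where w1: "w \<in> closed_nbhd V E (f (?sl ! i))"
      and w2: "\<forall>j'\<in>J. j' < ?sl ! i \<longrightarrow> w \<notin> closed_nbhd V E (f j')"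
      using w iJ by blast
    have "w \<notin> closed_nbhd V E (map f ?sl ! j)" if j: "j < i" for j
    proof -
      have "?sl ! j < ?sl ! i" using s2 j i by (simp add: sorted_wrt_nth_less)
      moreover have "?sl ! j \<in> J" using j i s1 nth_mem by fastforce
      ultimately show ?thesis using w2 j i by auto
    qed
    then show ?thesis using w1 i by auto
  qed
  show ?thesis unfolding legal_def using dist sub fp by blast
qed

lemma Hbound:
  assumes g: "fin_graph V E" and fJ: "finite (J::nat set)" and inj: "inj_on f J" and fV: "f ` J \<subseteq> V"
    and w: "\<forall>j\<in>J. \<exists>w\<in>closed_nbhd V E (f j). \<forall>j'\<in>J. j' < j \<longrightarrow> w \<notin> closed_nbhd V E (f j')"
  shows "card J \<le> grundy_dom_num V E"
  using legal_le[OF _ Hbound_legal[OF fJ inj fV w]] fJ g by (simp add: fin_graph_def)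

lemma Hbound2:
  assumes g: "fin_graph V E" and fJ: "finite (J::nat set)" and inj: "inj_on f J" and fV: "f ` J \<subseteq> V"
    and w: "\<forall>j\<in>J. \<exists>w\<in>closed_nbhd V E (f j). \<forall>j'\<in>J. j' < j \<longrightarrow> w \<notin> closed_nbhd V E (f j')"
    and w0: "w0 \<in> V" "\<forall>j\<in>J. w0 \<notin> closed_nbhd V E (f j)"
  shows "card J + 1 \<le> grundy_dom_num V E"
proof -
  let ?xs = "map f (sorted_list_of_set J)"
  have l: "legal V E ?xs" by (rule Hbound_legal[OF fJ inj fV w])
  have "w0 \<notin> set ?xs" using w0 fJ self_in_cn by fastforce
  moreover have "w0 \<notin> (\<Union>u\<in>set ?xs. closed_nbhd V E u)" using w0 fJ by auto
  ultimately have "legal V E (?xs @ [w0])" unfolding legal_snoc using l w0(1) self_in_cn[of w0 V E] by blast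
  have "finite V" using g by (simp add: fin_graph_def)
  from legal_le[OF this \<open>legal V E (?xs @ [w0])\<close>] fJ show ?thesis by simp
qed

lemma lex_nb:
  assumes gG: "fin_graph VG EG" and gh: "g \<in> VG" "h \<in> VH"
  shows "u \<in> closed_nbhd (lex_vertices VG VH) (lex_edges EG VH EH) (g,h) \<longleftrightarrow>
     u \<in> VG \<times> VH \<and> (EG g (fst u) \<or> (fst u = g \<and> snd u \<in> closed_nbhd VH EH h))"
proof (cases u)
  case (Pair a b)
  have e: "EG x y \<Longrightarrow> x \<in> VG \<and> y \<in> VG" for x y using gG by (simp add: fin_graph_def)
  have 1: "(a,b) \<in> closed_nbhd (lex_vertices VG VH) (lex_edges EG VH EH) (g,h) \<longleftrightarrow>
     (a = g \<and> b = h) \<or> (a \<in> VG \<and> b \<in> VH \<and> (EG g a \<or> (g = a \<and> EH h b)))"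
    unfolding closed_nbhd_def open_nbhd_def lex_vertices_def lex_edges_def using gh by simp
  have 2: "(a,b) \<in> VG \<times> VH \<and> (EG g (fst (a,b)) \<or> (fst (a,b) = g \<and> snd (a,b) \<in> closed_nbhd VH EH h))
     \<longleftrightarrow> a \<in> VG \<and> b \<in> VH \<and> (EG g a \<or> (a = g \<and> (b = h \<or> EH h b)))"
    unfolding closed_nbhd_def open_nbhd_def by auto
  show ?thesis unfolding Pair 1 2 using gh e by auto
qed


locale upb =
  fixes VG :: "'a set" and EG :: "'a \<Rightarrow> 'a \<Rightarrow> bool" and VH :: "'b set" and EH :: "'b \<Rightarrow> 'b \<Rightarrow> bool"
    and I K :: "'a set" and S :: "('a \<times> 'b) list"
  assumes gG: "fin_graph VG EG" and gH: "fin_graph VH EH" and neH: "VH \<noteq> {}"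
    and VGIK: "VG = I \<union> K" and disj: "I \<inter> K = {}"
    and cl: "clique VG EG K" and ind: "indep_set VG EG I"
    and nbI: "\<forall>k\<in>K. \<exists>i\<in>I. EG k i"
    and leg: "legal (lex_vertices VG VH) (lex_edges EG VH EH) S"
begin

abbreviation "NP x \<equiv> closed_nbhd (lex_vertices VG VH) (lex_edges EG VH EH) x"
abbreviation "NH h \<equiv> closed_nbhd VH EH h"
abbreviation "gam \<equiv> grundy_dom_num VH EH"
definition "Dom j = (\<Union>j'<j. NP (S!j'))"
definition "fp j = NP (S!j) - Dom j"
definition "J g = {j. j < length S \<and> fst (S!j) = g}"

lemma EG_sym: "EG x y \<Longrightarrow> EG y x" using gG by (simp add: fin_graph_def)
lemma EG_V: "EG x y \<Longrightarrow> x \<in> VG \<and> y \<in> VG" using gG by (simp add: fin_graph_def)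
lemma EG_irr: "\<not> EG x x" using gG by (simp add: fin_graph_def)
lemma I_ind: "i \<in> I \<Longrightarrow> i' \<in> I \<Longrightarrow> \<not> EG i i'" using ind by (simp add: indep_set_def)
lemma K_cl: "k \<in> K \<Longrightarrow> k' \<in> K \<Longrightarrow> k \<noteq> k' \<Longrightarrow> EG k k'" using cl by (simp add: clique_def)
lemma finVG: "finite VG" using gG by (simp add: fin_graph_def)
lemma finI: "finite I" using finVG VGIK by simp

lemma inV: "j < length S \<Longrightarrow> S!j \<in> VG \<times> VH"
  using leg nth_mem[of j S] unfolding legal_def lex_vertices_def by blast

lemma fst_IK: "j < length S \<Longrightarrow> fst (S!j) \<in> I \<or> fst (S!j) \<in> K"
  using inV[of j] VGIK by (cases "S!j") auto

lemma NP_iff: "j < length S \<Longrightarrow> u \<in> NP (S!j) \<longleftrightarrow> u \<in> VG \<times> VH \<and>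
   (EG (fst (S!j)) (fst u) \<or> (fst u = fst (S!j) \<and> snd u \<in> NH (snd (S!j))))"
  using lex_nb[OF gG, of "fst (S!j)" "snd (S!j)" VH u EH] inV[of j]
  by (cases "S!j") auto

lemma fp_ne: "j < length S \<Longrightarrow> fp j \<noteq> {}"
  using leg unfolding legal_def fp_def Dom_def by blast

lemma fpD: "u \<in> fp j \<Longrightarrow> u \<in> NP (S!j) \<and> u \<notin> Dom j"
  unfolding fp_def by blast

lemma dom_in: "j' < j \<Longrightarrow> u \<in> NP (S!j') \<Longrightarrow> u \<in> Dom j"
  unfolding Dom_def by blast

lemma dom_adj: "j' < j \<Longrightarrow> j' < length S \<Longrightarrow> u \<in> VG \<times> VH \<Longrightarrow> EG (fst (S!j')) (fst u) \<Longrightarrow> u \<in> Dom j"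
  using dom_in NP_iff by blast

lemma DomD: "u \<in> Dom j \<Longrightarrow> \<exists>j'<j. u \<in> NP (S!j')"
  unfolding Dom_def by blast

lemma fp_V: "u \<in> fp j \<Longrightarrow> j < length S \<Longrightarrow> u \<in> VG \<times> VH"
  using fpD NP_iff by blast

lemma nth_inj: "j < length S \<Longrightarrow> j' < length S \<Longrightarrow> S!j = S!j' \<Longrightarrow> j = j'"
  using leg unfolding legal_def by (simp add: nth_eq_iff_index_eq)

lemma J_fin: "finite (J g)" unfolding J_def by simp

lemma J_cond: "\<forall>j\<in>J g. \<exists>w\<in>NH (snd (S!j)). \<forall>j'\<in>J g. j' < j \<longrightarrow> w \<notin> NH (snd (S!j'))"
proof
  fix j assume j: "j \<in> J g"
  then have jl: "j < length S" and jg: "fst (S!j) = g" by (auto simp: J_def)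
  obtain u where u: "u \<in> fp j" using fp_ne[OF jl] by blast
  have uN: "u \<in> NP (S!j)" and uD: "u \<notin> Dom j" using fpD[OF u] by auto
  have uV: "u \<in> VG \<times> VH" using fp_V[OF u jl] .
  show "\<exists>w\<in>NH (snd (S!j)). \<forall>j'\<in>J g. j' < j \<longrightarrow> w \<notin> NH (snd (S!j'))"
  proof (cases "EG g (fst u)")
    case True
    have "\<forall>j'\<in>J g. \<not> j' < j"
    proof (intro ballI notI)
      fix j' assume "j' \<in> J g" "j' < j"
      then have "j' < length S" "fst (S!j') = g" by (auto simp: J_def)
      then have "u \<in> Dom j" using dom_adj[OF \<open>j' < j\<close> _ uV] True by simp
      then show False using uD by simp
    qed
    then show ?thesis using self_in_cn[of "snd (S!j)" VH EH] by blast
  next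
    case False
    then have u1: "fst u = g" and u2: "snd u \<in> NH (snd (S!j))" using uN NP_iff[OF jl] jg by auto
    have "\<forall>j'\<in>J g. j' < j \<longrightarrow> snd u \<notin> NH (snd (S!j'))"
    proof (intro ballI impI notI)
      fix j' assume j': "j' \<in> J g" "j' < j" "snd u \<in> NH (snd (S!j'))"
      then have "j' < length S" "fst (S!j') = g" by (auto simp: J_def)
      then have "u \<in> NP (S!j')" using NP_iff[of j' u] uV u1 j'(3) by simp
      then show False using dom_in[OF j'(2)] uD by blast
    qed
    then show ?thesis using u2 by blast
  qed
qed

lemma J_inj: "inj_on (\<lambda>j. snd (S!j)) (J g)"
proof (rule inj_onI)
  fix x y assume "x \<in> J g" "y \<in> J g" "snd (S!x) = snd (S!y)"
  then have "x < length S" "y < length S" "S!x = S!y" by (auto simp: J_def prod_eq_iff)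
  then show "x = y" using nth_inj by blast
qed

lemma J_img: "(\<lambda>j. snd (S!j)) ` J g \<subseteq> VH"
  using inV by (auto simp: J_def mem_Times_iff)

lemma J_le: "card (J g) \<le> gam"
  using Hbound[OF gH J_fin J_inj J_img J_cond] .

lemma J_le2:
  assumes t: "\<forall>j\<in>J g. j < t" and w0: "w0 \<in> VH" and nd: "(g, w0) \<notin> Dom t"
  shows "card (J g) + 1 \<le> gam"
proof -
  have "\<forall>j\<in>J g. w0 \<notin> NH (snd (S!j))"
  proof (intro ballI notI)
    fix j assume j: "j \<in> J g" "w0 \<in> NH (snd (S!j))"
    then have "j < length S" "fst (S!j) = g" by (auto simp: J_def)
    then have "(g,w0) \<in> NP (S!j)" using NP_iff[of j "(g,w0)"] w0 j(2) inV[of j] by (auto simp: mem_Times_iff)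
    then show False using dom_in t j(1) nd by blast
  qed
  then show ?thesis using Hbound2[OF gH J_fin J_inj J_img J_cond w0] by blast
qed

end


context upb begin

definition "JK = {j. j < length S \<and> fst (S!j) \<in> K}"
definition "dl i = gam - card (J i)"
definition "C = {j \<in> JK. \<exists>u\<in>fp j. fst u \<in> I}"
definition "ch j = (SOME i. i \<in> I \<and> (\<exists>u\<in>fp j. fst u = i))"

lemma JK_fin: "finite JK" unfolding JK_def by simp

lemma JKD: "j \<in> JK \<Longrightarrow> j < length S \<and> fst (S!j) \<in> K" unfolding JK_def by simp

lemma chD: "j \<in> C \<Longrightarrow> ch j \<in> I \<and> (\<exists>u\<in>fp j. fst u = ch j)"
proof -
  assume "j \<in> C"
  then have "\<exists>i. i \<in> I \<and> (\<exists>u\<in>fp j. fst u = i)" unfolding C_def by blast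
  then show ?thesis unfolding ch_def by (rule someI_ex)
qed

lemma CD: "j \<in> C \<Longrightarrow> j \<in> JK" unfolding C_def by simp

lemma ch_adj: "j \<in> C \<Longrightarrow> EG (fst (S!j)) (ch j)"
proof -
  assume jC: "j \<in> C"
  obtain u where u: "u \<in> fp j" "fst u = ch j" and chI: "ch j \<in> I" using chD[OF jC] by blast
  have jl: "j < length S" and jK: "fst (S!j) \<in> K" using JKD[OF CD[OF jC]] by auto
  have "u \<in> NP (S!j)" using fpD[OF u(1)] by simp
  then have "EG (fst (S!j)) (fst u) \<or> fst u = fst (S!j)" using NP_iff[OF jl] by blast
  then show ?thesis using u(2) chI jK disj by auto
qed

lemma ch_inj: "inj_on ch C"
proof -
  have *: "ch j1 \<noteq> ch j2" if j: "j1 \<in> C" "j2 \<in> C" "j1 < j2" for j1 j2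
  proof
    assume eq: "ch j1 = ch j2"
    obtain u where u: "u \<in> fp j2" "fst u = ch j2" using chD[OF j(2)] by blast
    have l2: "j2 < length S" using JKD[OF CD[OF j(2)]] by simp
    have l1: "j1 < length S" using j(3) l2 by simp
    have "u \<in> Dom j2" using dom_adj[OF j(3) l1 fp_V[OF u(1) l2]] ch_adj[OF j(1)] eq u(2) by simp
    then show False using fpD[OF u(1)] by simp
  qed
  show ?thesis
  proof (rule inj_onI)
    fix x y assume "x \<in> C" "y \<in> C" "ch x = ch y"
    then show "x = y" using *[of x y] *[of y x] by (metis linorder_neqE_nat)
  qed
qed

lemma def_charged:
  assumes jC: "j \<in> C" and nl: "\<forall>j'\<in>J (ch j). \<not> j < j'"
  shows "card (J (ch j)) + 1 \<le> gam"
proof -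
  obtain u where u: "u \<in> fp j" "fst u = ch j" and chI: "ch j \<in> I" using chD[OF jC] by blast
  have jl: "j < length S" and jK: "fst (S!j) \<in> K" using JKD[OF CD[OF jC]] by auto
  have t: "\<forall>j'\<in>J (ch j). j' < j"
  proof
    fix j' assume j': "j' \<in> J (ch j)"
    then have "fst (S!j') = ch j" by (simp add: J_def)
    then have "j' \<noteq> j" using chI jK disj by auto
    then show "j' < j" using nl j' by auto
  qed
  have uV: "u \<in> VG \<times> VH" using fp_V[OF u(1) jl] .
  have "(ch j, snd u) = u" using u(2) by (simp add: prod_eq_iff)
  then have "(ch j, snd u) \<notin> Dom j" using fpD[OF u(1)] by simp
  then show ?thesis using J_le2[OF t _] uV by (auto simp: mem_Times_iff)
qed

lemma charge_sum:
  assumes X: "X \<subseteq> C" and nl: "\<forall>j\<in>X. \<forall>j'\<in>J (ch j). \<not> j < j'"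
  shows "card X \<le> (\<Sum>i\<in>ch ` X. dl i)"
proof -
  have "X \<subseteq> JK" using X CD by blast
  then have fX: "finite X" using JK_fin finite_subset by blast
  have inj: "inj_on ch X" using ch_inj X inj_on_subset by blast
  have "card X = card (ch ` X)" using card_image[OF inj] by simp
  also have "\<dots> = (\<Sum>i\<in>ch ` X. 1)" by simp
  also have "\<dots> \<le> (\<Sum>i\<in>ch ` X. dl i)"
  proof (rule sum_mono)
    fix i assume "i \<in> ch ` X"
    then obtain j where j: "j \<in> X" "i = ch j" by blast
    have "card (J (ch j)) + 1 \<le> gam" using def_charged[of j] j X nl by blast
    then show "1 \<le> dl i" using j by (simp add: dl_def)
  qed
  finally show ?thesis .
qed

lemma later_I_fp:
  assumes jC: "j \<in> C" and j': "j' \<in> J (ch j)" "j < j'" and u': "u' \<in> fp j'"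
  shows "fst u' = fst (S!j)"
proof -
  have jl: "j < length S" and jK: "fst (S!j) \<in> K" using JKD[OF CD[OF jC]] by auto
  have j'l: "j' < length S" and fj': "fst (S!j') = ch j" using j' by (auto simp: J_def)
  have chI: "ch j \<in> I" using chD[OF jC] by blast
  have u'V: "u' \<in> VG \<times> VH" using fp_V[OF u' j'l] .
  have u'N: "u' \<in> NP (S!j')" and u'D: "u' \<notin> Dom j'" using fpD[OF u'] by auto
  have "fst u' \<noteq> ch j"
  proof
    assume "fst u' = ch j"
    then have "u' \<in> Dom j'" using dom_adj[OF j'(2) jl u'V] ch_adj[OF jC] by simp
    then show False using u'D by simp
  qed
  then have e: "EG (ch j) (fst u')" using u'N NP_iff[OF j'l] fj' by auto
  then have "fst u' \<in> VG" using EG_V[OF e] by simp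
  moreover have "fst u' \<notin> I" using e I_ind[OF chI] by metis
  ultimately have fK: "fst u' \<in> K" using VGIK by blast
  show ?thesis
  proof (rule ccontr)
    assume "fst u' \<noteq> fst (S!j)"
    then have "EG (fst (S!j)) (fst u')" using K_cl[OF jK fK] by metis
    then have "u' \<in> Dom j'" using dom_adj[OF j'(2) jl u'V] by simp
    then show False using u'D by simp
  qed
qed

lemma sum_extra:
  assumes "X \<subseteq> I" "a \<in> I" "a \<notin> X"
  shows "(\<Sum>i\<in>X. dl i) + dl a \<le> (\<Sum>i\<in>I. dl i)"
proof -
  have fX: "finite X" using assms(1) finI finite_subset by blast
  have "(\<Sum>i\<in>X. dl i) + dl a = (\<Sum>i\<in>insert a X. dl i)" using fX assms(3) by simp
  also have "\<dots> \<le> (\<Sum>i\<in>I. dl i)" using assms finI by (intro sum_mono2) auto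
  finally show ?thesis .
qed

lemma sum_sub:
  assumes "X \<subseteq> I"
  shows "(\<Sum>i\<in>X. dl i) \<le> (\<Sum>i\<in>I. dl i)"
  using assms finI by (intro sum_mono2) auto

end


context upb begin

lemma card_le_minus1: "y \<in> X \<Longrightarrow> finite X \<Longrightarrow> card (X - {y}) + 1 = card X"
  by (metis One_nat_def Suc_pred card_Diff_singleton card_gt_0_iff empty_iff Suc_eq_plus1)

lemma main_K: "card JK \<le> split_n VG EG I K + (\<Sum>i\<in>I. dl i)"
proof (cases "JK = {}")
  case True
  then show ?thesis by simp
next
  case False
  define y where "y = Min JK"
  have yJK: "y \<in> JK" using Min_in[OF JK_fin False] y_def by simp
  have ymin: "\<And>j. j \<in> JK \<Longrightarrow> y \<le> j" using Min_le[OF JK_fin] y_def by simp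
  have yl: "y < length S" and k1K: "fst (S!y) \<in> K" using JKD[OF yJK] by auto
  define k1 where "k1 = fst (S!y)"
  have k1K': "k1 \<in> K" using k1K k1_def by simp
  define A where "A = {a\<in>I. EG k1 a}"
  obtain a0 where a0: "a0 \<in> I" "EG k1 a0" using nbI k1K' by blast
  have a0A: "a0 \<in> A" using a0 A_def by simp
  have ydom: "u \<in> Dom j" if "y < j" "u \<in> VG \<times> VH" "EG k1 (fst u)" for j u
    using dom_adj[OF that(1) yl that(2)] that(3) k1_def by simp
  have ydomK: "u \<in> Dom j" if "y < j" "u \<in> VG \<times> VH" "fst u \<in> K" "fst u \<noteq> k1" for j u
  proof -
    have "EG k1 (fst u)" using K_cl[OF k1K' that(3)] that(4) by metis
    then show ?thesis using ydom that(1,2) by blast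
  qed
  have nI_K: "x \<in> K" if "x \<in> VG" "x \<notin> I" for x using that VGIK by blast
  define C' where "C' = {j\<in>C. y < j}"
  have C'sub: "C' \<subseteq> C" unfolding C'_def by blast
  have C'1: "fst (S!j) \<noteq> k1" if "j \<in> C'" for j
  proof
    assume eq: "fst (S!j) = k1"
    have jC: "j \<in> C" and yj: "y < j" using that C'_def by auto
    have jl: "j < length S" using JKD[OF CD[OF jC]] by simp
    obtain u where u: "u \<in> fp j" "fst u = ch j" and chI: "ch j \<in> I" using chD[OF jC] by blast
    have "EG k1 (ch j)" using ch_adj[OF jC] eq by simp
    then have "u \<in> Dom j" using ydom[OF yj fp_V[OF u(1) jl]] u(2) by simp
    then show False using fpD[OF u(1)] by simp
  qed
  have C'2: "\<forall>j'\<in>J (ch j). \<not> j < j'" if "j \<in> C'" for j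
  proof (intro ballI notI)
    fix j' assume j': "j' \<in> J (ch j)" "j < j'"
    have jC: "j \<in> C" and yj: "y < j" using that C'_def by auto
    have j'l: "j' < length S" using j' by (simp add: J_def)
    obtain u' where u': "u' \<in> fp j'" using fp_ne[OF j'l] by blast
    have f: "fst u' = fst (S!j)" using later_I_fp[OF jC j' u'] .
    have "fst (S!j) \<in> K" using JKD[OF CD[OF jC]] by simp
    then have "u' \<in> Dom j'" using ydomK[of j' u'] yj j'(2) fp_V[OF u' j'l] f C'1[OF that] by simp
    then show False using fpD[OF u'] by simp
  qed
  have C'3: "ch j \<notin> A" if "j \<in> C'" for j
  proof
    assume "ch j \<in> A"
    then have e: "EG k1 (ch j)" using A_def by simp
    have jC: "j \<in> C" and yj: "y < j" using that C'_def by auto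
    have jl: "j < length S" using JKD[OF CD[OF jC]] by simp
    obtain u where u: "u \<in> fp j" "fst u = ch j" using chD[OF jC] by blast
    have "u \<in> Dom j" using ydom[OF yj fp_V[OF u(1) jl]] u(2) e by simp
    then show False using fpD[OF u(1)] by simp
  qed
  have chI: "ch ` X \<subseteq> I" if "X \<subseteq> C" for X using chD that by blast
  have C'sum: "card C' \<le> (\<Sum>i\<in>ch ` C'. dl i)" using charge_sum[OF C'sub] C'2 by blast
  have finC': "finite C'" using C'sub CD JK_fin by (meson finite_subset subsetI)
  have pure_after: "fst u = k1" if "j \<in> JK" "y < j" "j \<notin> C" "u \<in> fp j" for j u
  proof -
    have jl: "j < length S" using JKD[OF that(1)] by simp
    have uV: "u \<in> VG \<times> VH" using fp_V[OF that(4) jl] .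
    have "fst u \<notin> I" using that(1,3,4) unfolding C_def by blast
    then have fK: "fst u \<in> K" using uV nI_K by (auto simp: mem_Times_iff)
    show ?thesis
    proof (rule ccontr)
      assume "fst u \<noteq> k1"
      then have "u \<in> Dom j" using ydomK[OF that(2) uV fK] by simp
      then show False using fpD[OF that(4)] by simp
    qed
  qed
  have pure_nZ: "\<not> EG (fst (S!j')) k1" if "j \<in> JK" "y < j" "j \<notin> C" "j' < j" for j j'
  proof
    assume e: "EG (fst (S!j')) k1"
    have jl: "j < length S" using JKD[OF that(1)] by simp
    obtain u where u: "u \<in> fp j" using fp_ne[OF jl] by blast
    have "fst u = k1" using pure_after[OF that(1-3) u] .
    then have "u \<in> Dom j" using dom_adj[OF that(4) _ fp_V[OF u jl]] e that(4) jl by simp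
    then show False using fpD[OF u] by simp
  qed
  have gpos: "1 \<le> gam" using gdn_pos[OF _ neH] gH by (simp add: fin_graph_def)
  have yJ: "y \<in> J k1" using yl k1_def by (simp add: J_def)
  have Jk1: "card (J k1) \<le> gam" using J_le .
  have Jk1pos: "card (J k1 - {y}) + 1 = card (J k1)" using card_le_minus1[OF yJ J_fin] .
  show ?thesis
  proof (cases "\<exists>j0<y. EG (fst (S!j0)) k1")
    case True
    then obtain j0 where j0: "j0 < y" "EG (fst (S!j0)) k1" by blast
    have j0l: "j0 < length S" using j0(1) yl by simp
    have JKsub: "JK \<subseteq> insert y C'"
    proof
      fix j assume jJK: "j \<in> JK"
      show "j \<in> insert y C'"
      proof (cases "j = y")
        case False
        then have yj: "y < j" using ymin[OF jJK] by simp
        have "j \<in> C"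
        proof (rule ccontr)
          assume "j \<notin> C"
          then show False using pure_nZ[OF jJK yj _ ] j0 yj by (meson order.strict_trans)
        qed
        then show ?thesis using yj C'_def by simp
      qed simp
    qed
    show ?thesis
    proof (cases "y \<in> C")
      case True
      have nly: "\<forall>j'\<in>J (ch y). \<not> y < j'"
      proof (intro ballI notI)
        fix j' assume j': "j' \<in> J (ch y)" "y < j'"
        have j'l: "j' < length S" using j' by (simp add: J_def)
        obtain u' where u': "u' \<in> fp j'" using fp_ne[OF j'l] by blast
        have f: "fst u' = k1" using later_I_fp[OF True j' u'] k1_def by simp
        have "u' \<in> Dom j'" using dom_adj[OF _ j0l fp_V[OF u' j'l]] j0 j'(2) f by simp
        then show False using fpD[OF u'] by simp
      qed
      have sub: "insert y C' \<subseteq> C" using True C'sub by simp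
      have nl: "\<forall>j\<in>insert y C'. \<forall>j'\<in>J (ch j). \<not> j < j'" using nly C'2 by blast
      have "card JK \<le> card (insert y C')" using JKsub finC' by (simp add: card_mono)
      also have "\<dots> \<le> (\<Sum>i\<in>ch ` (insert y C'). dl i)" using charge_sum[OF sub nl] .
      also have "\<dots> \<le> (\<Sum>i\<in>I. dl i)" using sum_sub[OF chI[OF sub]] .
      finally show ?thesis by simp
    next
      case False
      obtain u where u: "u \<in> fp y" using fp_ne[OF yl] by blast
      have uV: "u \<in> VG \<times> VH" using fp_V[OF u yl] .
      have "fst u \<notin> I" using False yJK u unfolding C_def by blast
      then have fK: "fst u \<in> K" using uV nI_K by (auto simp: mem_Times_iff)
      have fk1: "fst u \<noteq> k1"
      proof
        assume "fst u = k1"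
        then have "u \<in> Dom y" using dom_adj[OF j0(1) j0l uV] j0(2) by simp
        then show False using fpD[OF u] by simp
      qed
      have cardJK: "card JK \<le> 1 + card C'"
      proof -
        have "card JK \<le> card (insert y C')" using JKsub finC' by (simp add: card_mono)
        also have "\<dots> \<le> Suc (card C')" by (simp add: card_insert_le_m1 card_insert_if finC')
        finally show ?thesis by simp
      qed
      show ?thesis
      proof (cases "\<exists>b\<in>A. EG (fst u) b")
        case True
        then obtain b where bA: "b \<in> A" and eb: "EG (fst u) b" by blast
        have bI: "b \<in> I" and kb: "EG k1 b" using bA A_def by auto
        have Jb: "J b = {}"
        proof (rule ccontr)
          assume "J b \<noteq> {}"
          then obtain j where j: "j \<in> J b" by blast
          have jl: "j < length S" and fj: "fst (S!j) = b" using j by (auto simp: J_def)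
          have "j \<noteq> y" using fj k1K bI disj by auto
          then consider "j < y" | "y < j" by linarith
          then show False
          proof cases
            case 1
            have "u \<in> Dom y" using dom_adj[OF 1 jl uV] fj EG_sym[OF eb] by simp
            then show False using fpD[OF u] by simp
          next
            case 2
            obtain u' where u': "u' \<in> fp j" using fp_ne[OF jl] by blast
            have u'V: "u' \<in> VG \<times> VH" using fp_V[OF u' jl] .
            have u'N: "u' \<in> NP (S!j)" using fpD[OF u'] by simp
            have "u' \<in> Dom j"
            proof (cases "fst u' = b")
              case True
              then show ?thesis using ydom[OF 2 u'V] kb by simp
            next
              case False
              then have e: "EG b (fst u')" using u'N NP_iff[OF jl] fj by auto
              have "fst u' \<notin> I" using I_ind[OF bI] e by metis
              then have fK': "fst u' \<in> K" using EG_V[OF e] nI_K by simp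
              show ?thesis
              proof (cases "fst u' = k1")
                case True
                then show ?thesis using dom_adj[OF _ j0l u'V] j0 2 by simp
              next
                case False
                then show ?thesis using ydomK[OF 2 u'V fK'] by simp
              qed
            qed
            then show False using fpD[OF u'] by simp
          qed
        qed
        have dlb: "dl b = gam" using Jb by (simp add: dl_def)
        have bn: "b \<notin> ch ` C'" using C'3 bA by blast
        have "card JK \<le> 1 + card C'" by (rule cardJK)
        also have "\<dots> \<le> dl b + (\<Sum>i\<in>ch ` C'. dl i)" using C'sum dlb gpos by simp
        also have "\<dots> \<le> (\<Sum>i\<in>I. dl i)" using sum_extra[OF chI[OF C'sub] bI bn] by simp
        finally show ?thesis by simp
      next
        case False
        have "open_nbhd VG EG (fst u) \<inter> open_nbhd VG EG k1 \<inter> I = {}"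
        proof (rule ccontr)
          assume "open_nbhd VG EG (fst u) \<inter> open_nbhd VG EG k1 \<inter> I \<noteq> {}"
          then obtain x where "x \<in> I" "EG (fst u) x" "EG k1 x" by (auto simp: open_nbhd_def)
          then show False using False A_def by blast
        qed
        then have sn: "split_n VG EG I K = 1" using fK k1K' unfolding split_n_def by auto
        have "card JK \<le> 1 + card C'" by (rule cardJK)
        also have "\<dots> \<le> 1 + (\<Sum>i\<in>ch ` C'. dl i)" using C'sum by simp
        also have "\<dots> \<le> 1 + (\<Sum>i\<in>I. dl i)" using sum_sub[OF chI[OF C'sub]] by simp
        finally show ?thesis using sn by simp
      qed
    qed
  next
    case False
    then have noZy: "\<And>j0. j0 < y \<Longrightarrow> \<not> EG (fst (S!j0)) k1" by blast
    have yC: "y \<in> C"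
    proof -
      have a0V: "a0 \<in> VG" using EG_V[OF a0(2)] by simp
      define u where "u = (a0, snd (S!y))"
      have uV: "u \<in> VG \<times> VH" using a0V inV[OF yl] u_def by (auto simp: mem_Times_iff)
      have uN: "u \<in> NP (S!y)" using NP_iff[OF yl] uV a0(2) k1_def u_def by simp
      have uD: "u \<notin> Dom y"
      proof
        assume "u \<in> Dom y"
        then obtain j' where j': "j' < y" "u \<in> NP (S!j')" using DomD by blast
        have j'l: "j' < length S" using j'(1) yl by simp
        have "EG (fst (S!j')) a0 \<or> a0 = fst (S!j')" using j'(2) NP_iff[OF j'l] u_def by auto
        then show False
        proof
          assume e: "EG (fst (S!j')) a0"
          show False
          proof (cases "fst (S!j') \<in> K")
            case True
            then have "j' \<in> JK" using j'l by (simp add: JK_def)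
            then show False using ymin j'(1) by fastforce
          next
            case False
            then have "fst (S!j') \<in> I" using fst_IK[OF j'l] by simp
            then show False using I_ind a0(1) e by metis
          qed
        next
          assume "a0 = fst (S!j')"
          then show False using noZy[OF j'(1)] EG_sym[OF a0(2)] by simp
        qed
      qed
      have "u \<in> fp y" using uN uD fp_def by simp
      moreover have "fst u \<in> I" using a0(1) u_def by simp
      ultimately show ?thesis using yJK C_def by blast
    qed
    define Pu where "Pu = {j\<in>JK. y < j \<and> j \<notin> C}"
    have finPu: "finite Pu" using JK_fin Pu_def by simp
    have JKsub: "JK \<subseteq> insert y (C' \<union> Pu)"
    proof
      fix j assume jJK: "j \<in> JK"
      show "j \<in> insert y (C' \<union> Pu)"
      proof (cases "j = y")
        case False
        then have "y < j" using ymin[OF jJK] by simp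
        then show ?thesis using jJK C'_def Pu_def by auto
      qed simp
    qed
    have cardJK: "card JK \<le> 1 + card C' + card Pu"
    proof -
      have "card JK \<le> card (insert y (C' \<union> Pu))" using JKsub finC' finPu by (simp add: card_mono)
      also have "\<dots> \<le> Suc (card (C' \<union> Pu))" by (simp add: card_insert_if finC' finPu)
      also have "\<dots> \<le> Suc (card C' + card Pu)" using card_Un_le[of C' Pu] by simp
      finally show ?thesis by simp
    qed
    have PuD: "j \<in> JK \<and> y < j \<and> j \<notin> C" if "j \<in> Pu" for j using that Pu_def by simp
    have key: "\<exists>a\<in>A. 1 + card Pu \<le> dl a"
    proof (cases "\<exists>j<length S. EG (fst (S!j)) k1")
      case False
      have "Pu \<subseteq> J k1 - {y}"
      proof
        fix j assume jP: "j \<in> Pu"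
        have jl: "j < length S" and fK: "fst (S!j) \<in> K" using JKD PuD[OF jP] by auto
        have "fst (S!j) = k1"
        proof (rule ccontr)
          assume "fst (S!j) \<noteq> k1"
          then have "EG (fst (S!j)) k1" using K_cl[OF fK k1K'] by metis
          then show False using False jl by blast
        qed
        then show "j \<in> J k1 - {y}" using jl PuD[OF jP] by (simp add: J_def)
      qed
      then have "card Pu \<le> card (J k1 - {y})" using J_fin by (simp add: card_mono)
      then have c1: "1 + card Pu \<le> gam" using Jk1pos Jk1 by simp
      have "J a0 = {}"
      proof (rule ccontr)
        assume "J a0 \<noteq> {}"
        then obtain j where "j \<in> J a0" by blast
        then have "j < length S" "fst (S!j) = a0" by (auto simp: J_def)
        then show False using False EG_sym[OF a0(2)] by blast
      qed
      then have "dl a0 = gam" by (simp add: dl_def)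
      then have "1 + card Pu \<le> dl a0" using c1 by simp
      then show ?thesis using a0A by blast
    next
      case True
      define Z where "Z = {j. j < length S \<and> EG (fst (S!j)) k1}"
      have finZ: "finite Z" using Z_def by simp
      have neZ: "Z \<noteq> {}" using True Z_def by blast
      define z where "z = Min Z"
      have zZ: "z \<in> Z" using Min_in[OF finZ neZ] z_def by simp
      have zmin: "\<And>j. j \<in> Z \<Longrightarrow> z \<le> j" using Min_le[OF finZ] z_def by simp
      have zl: "z < length S" and zE: "EG (fst (S!z)) k1" using zZ Z_def by auto
      have zk1: "fst (S!z) \<noteq> k1" using zE EG_irr by metis
      have yz: "y < z"
      proof -
        have "\<not> z < y" using noZy zE by blast
        moreover have "z \<noteq> y" using zk1 k1_def by auto
        ultimately show ?thesis by simp
      qed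
      have Jk1_before: "\<forall>j\<in>J k1. j < z"
      proof
        fix j assume j: "j \<in> J k1"
        have jl: "j < length S" and fj: "fst (S!j) = k1" using j by (auto simp: J_def)
        have "j \<noteq> z" using fj zk1 by auto
        moreover have "\<not> z < j"
        proof
          assume zj: "z < j"
          then have yj: "y < j" using yz by simp
          obtain u' where u': "u' \<in> fp j" using fp_ne[OF jl] by blast
          have u'V: "u' \<in> VG \<times> VH" using fp_V[OF u' jl] .
          have u'N: "u' \<in> NP (S!j)" using fpD[OF u'] by simp
          have "EG k1 (fst u') \<or> fst u' = k1" using u'N NP_iff[OF jl] fj by auto
          then have "u' \<in> Dom j"
          proof
            assume "EG k1 (fst u')"
            then show ?thesis using ydom[OF yj u'V] by simp
          next
            assume "fst u' = k1"
            then show ?thesis using dom_adj[OF zj zl u'V] zE by simp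
          qed
          then show False using fpD[OF u'] by simp
        qed
        ultimately show "j < z" by simp
      qed
      have Ja_sub: "J a \<subseteq> {z}" if aA: "a \<in> A" for a
      proof
        fix j assume j: "j \<in> J a"
        have aI: "a \<in> I" and ka: "EG k1 a" using aA A_def by auto
        have jl: "j < length S" and fj: "fst (S!j) = a" using j by (auto simp: J_def)
        have "j \<in> Z" using jl fj EG_sym[OF ka] Z_def by simp
        then have zj0: "z \<le> j" using zmin by simp
        have "\<not> z < j"
        proof
          assume zj: "z < j"
          then have yj: "y < j" using yz by simp
          obtain u' where u': "u' \<in> fp j" using fp_ne[OF jl] by blast
          have u'V: "u' \<in> VG \<times> VH" using fp_V[OF u' jl] .
          have u'N: "u' \<in> NP (S!j)" using fpD[OF u'] by simp
          have "u' \<in> Dom j"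
          proof (cases "fst u' = a")
            case True
            then show ?thesis using ydom[OF yj u'V] ka by simp
          next
            case False
            then have e: "EG a (fst u')" using u'N NP_iff[OF jl] fj by auto
            have "fst u' \<notin> I" using I_ind[OF aI] e by metis
            then have fK': "fst u' \<in> K" using EG_V[OF e] nI_K by simp
            show ?thesis
            proof (cases "fst u' = k1")
              case True
              then show ?thesis using dom_adj[OF zj zl u'V] zE by simp
            next
              case False
              then show ?thesis using ydomK[OF yj u'V fK'] by simp
            qed
          qed
          then show False using fpD[OF u'] by simp
        qed
        then show "j \<in> {z}" using zj0 by simp
      qed
      have Pu_sub2: "Pu \<subseteq> insert z (J k1 - {y})"
      proof
        fix j assume jP: "j \<in> Pu"
        have jJK: "j \<in> JK" and yj: "y < j" and jC: "j \<notin> C" using PuD[OF jP] by auto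
        have jl: "j < length S" and fK: "fst (S!j) \<in> K" using JKD[OF jJK] by auto
        show "j \<in> insert z (J k1 - {y})"
        proof (cases "fst (S!j) = k1")
          case True
          then show ?thesis using jl yj by (simp add: J_def)
        next
          case False
          then have "EG (fst (S!j)) k1" using K_cl[OF fK k1K'] by metis
          then have "j \<in> Z" using jl Z_def by simp
          then have "z \<le> j" using zmin by simp
          moreover have "\<not> z < j" using pure_nZ[OF jJK yj jC] zE by blast
          ultimately show ?thesis by simp
        qed
      qed
      have strict: "card (J k1) + 1 \<le> gam" if "z \<in> Pu \<or> fst (S!z) \<in> A"
      proof -
        obtain u where u: "u \<in> fp z" using fp_ne[OF zl] by blast
        have uV: "u \<in> VG \<times> VH" using fp_V[OF u zl] .
        have fu: "fst u = k1"
          using that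
        proof
          assume "z \<in> Pu"
          then show ?thesis using PuD pure_after u by blast
        next
          assume zA: "fst (S!z) \<in> A"
          have aI: "fst (S!z) \<in> I" and ka: "EG k1 (fst (S!z))" using zA A_def by auto
          have uN: "u \<in> NP (S!z)" using fpD[OF u] by simp
          show ?thesis
          proof (rule ccontr)
            assume nk: "fst u \<noteq> k1"
            have "u \<in> Dom z"
            proof (cases "fst u = fst (S!z)")
              case True
              then show ?thesis using ydom[OF yz uV] ka by simp
            next
              case False
              then have e: "EG (fst (S!z)) (fst u)" using uN NP_iff[OF zl] by auto
              have "fst u \<notin> I" using I_ind[OF aI] e by metis
              then have fK': "fst u \<in> K" using EG_V[OF e] nI_K by simp
              then show ?thesis using ydomK[OF yz uV fK' nk] by simp
            qed
            then show False using fpD[OF u] by simp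
          qed
        qed
        have "(k1, snd u) = u" using fu by (simp add: prod_eq_iff)
        then have "(k1, snd u) \<notin> Dom z" using fpD[OF u] by simp
        moreover have "snd u \<in> VH" using uV by (auto simp: mem_Times_iff)
        ultimately show ?thesis using J_le2[OF Jk1_before] by blast
      qed
      show ?thesis
      proof (cases "fst (S!z) \<in> K")
        case False
        then have zI: "fst (S!z) \<in> I" using fst_IK[OF zl] by simp
        have zA: "fst (S!z) \<in> A" using zI EG_sym[OF zE] A_def by simp
        have zn: "z \<notin> Pu" using PuD JKD False by blast
        have "Pu \<subseteq> J k1 - {y}" using Pu_sub2 zn by blast
        then have "card Pu \<le> card (J k1 - {y})" using J_fin by (simp add: card_mono)
        moreover have "card (J k1) + 1 \<le> gam" using strict zA by blast
        moreover have "card (J (fst (S!z))) \<le> 1"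
        proof -
          have "card (J (fst (S!z))) \<le> card {z}" by (rule card_mono) (simp, rule Ja_sub[OF zA])
          then show ?thesis by simp
        qed
        ultimately have "1 + card Pu \<le> dl (fst (S!z))" using Jk1pos by (simp add: dl_def)
        then show ?thesis using zA by blast
      next
        case True
        have "J a0 = {}"
        proof -
          have "J a0 \<subseteq> {z}" using Ja_sub[OF a0A] .
          moreover have "z \<notin> J a0" using True a0(1) disj by (auto simp: J_def)
          ultimately show ?thesis by blast
        qed
        then have dla: "dl a0 = gam" by (simp add: dl_def)
        have "card Pu + 1 \<le> gam"
        proof (cases "z \<in> Pu")
          case True
          have "card Pu \<le> card (insert z (J k1 - {y}))" using Pu_sub2 J_fin by (simp add: card_mono)
          also have "\<dots> \<le> Suc (card (J k1 - {y}))" by (simp add: card_insert_if J_fin)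
          finally show ?thesis using strict True Jk1pos by simp
        next
          case False
          have "Pu \<subseteq> J k1 - {y}" using Pu_sub2 False by blast
          then have "card Pu \<le> card (J k1 - {y})" using J_fin by (simp add: card_mono)
          then show ?thesis using Jk1pos Jk1 by simp
        qed
        then have "1 + card Pu \<le> dl a0" using dla by simp
        then show ?thesis using a0A by blast
      qed
    qed
    then obtain a where aA: "a \<in> A" and ak: "1 + card Pu \<le> dl a" by blast
    have aI: "a \<in> I" using aA A_def by simp
    have an: "a \<notin> ch ` C'" using C'3 aA by blast
    have "card JK \<le> 1 + card C' + card Pu" by (rule cardJK)
    also have "\<dots> \<le> (\<Sum>i\<in>ch ` C'. dl i) + dl a" using C'sum ak by simp
    also have "\<dots> \<le> (\<Sum>i\<in>I. dl i)" using sum_extra[OF chI[OF C'sub] aI an] .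
    finally show ?thesis by simp
  qed
qed

end


context upb begin

lemma len_bound: "length S \<le> card I * gam + split_n VG EG I K"
proof -
  define JI where "JI = {j. j < length S \<and> fst (S!j) \<in> I}"
  have u: "{..<length S} = JI \<union> JK"
  proof (rule set_eqI)
    fix j
    show "j \<in> {..<length S} \<longleftrightarrow> j \<in> JI \<union> JK"
    proof
      assume "j \<in> {..<length S}"
      then have "j < length S" by simp
      then show "j \<in> JI \<union> JK" using fst_IK[of j] unfolding JI_def JK_def by blast
    qed (auto simp: JI_def JK_def)
  qed
  have d: "JI \<inter> JK = {}" using disj unfolding JI_def JK_def by auto
  have fJI: "finite JI" unfolding JI_def by simp
  have "length S = card {..<length S}" by simp
  also have "\<dots> = card (JI \<union> JK)" by (simp only: u)
  also have "\<dots> = card JI + card JK" by (rule card_Un_disjoint[OF fJI JK_fin d])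
  finally have "length S = card JI + card JK" .
  moreover have "JI = (\<Union>i\<in>I. J i)" unfolding JI_def J_def by auto
  moreover have "card (\<Union>i\<in>I. J i) = (\<Sum>i\<in>I. card (J i))"
    by (rule card_UN_disjoint) (auto simp: finI J_fin J_def)
  moreover have "(\<Sum>i\<in>I. card (J i)) + (\<Sum>i\<in>I. dl i) = card I * gam"
  proof -
    have "(\<Sum>i\<in>I. card (J i)) + (\<Sum>i\<in>I. dl i) = (\<Sum>i\<in>I. card (J i) + dl i)" by (simp add: sum.distrib)
    also have "\<dots> = (\<Sum>i\<in>I. gam)" using J_le by (intro sum.cong) (auto simp: dl_def)
    finally show ?thesis by simp
  qed
  ultimately have "length S = (\<Sum>i\<in>I. card (J i)) + card JK" by simp
  then show ?thesis using main_K \<open>(\<Sum>i\<in>I. card (J i)) + (\<Sum>i\<in>I. dl i) = card I * gam\<close> by linarith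
qed

end

lemma lex_finite:
  assumes "fin_graph VG EG" "fin_graph VH EH"
  shows "finite (lex_vertices VG VH)"
  using assms unfolding fin_graph_def lex_vertices_def by auto

definition blocks :: "'a list \<Rightarrow> 'b list \<Rightarrow> ('a \<times> 'b) list" where
  "blocks is hs = concat (map (\<lambda>i. map (Pair i) hs) is)"

lemma blocks_snoc: "blocks (is @ [i]) hs = blocks is hs @ map (Pair i) hs"
  by (simp add: blocks_def)

lemma set_blocks: "set (blocks is hs) = set is \<times> set hs"
  by (auto simp: blocks_def)

lemma length_blocks: "length (blocks is hs) = length is * length hs"
  by (induction "is" rule: rev_induct) (auto simp: blocks_snoc blocks_def)

lemma block_legal:
  assumes gG: "fin_graph VG EG" and hs: "legal VH EH hs"
    and xs: "legal (lex_vertices VG VH) (lex_edges EG VH EH) xs" and i: "i \<in> VG"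
    and nx: "\<forall>x\<in>set xs. fst x \<noteq> i \<and> \<not> EG (fst x) i"
  shows "legal (lex_vertices VG VH) (lex_edges EG VH EH) (xs @ map (Pair i) hs)"
  using hs
proof (induction hs rule: rev_induct)
  case Nil
  then show ?case using xs by simp
next
  case (snoc h hs')
  have H: "legal VH EH hs'" "h \<in> VH" "h \<notin> set hs'"
    "closed_nbhd VH EH h - (\<Union>u\<in>set hs'. closed_nbhd VH EH u) \<noteq> {}"
    using snoc.prems unfolding legal_snoc by auto
  have IH: "legal (lex_vertices VG VH) (lex_edges EG VH EH) (xs @ map (Pair i) hs')" using snoc.IH H(1) .
  obtain w where w1: "w \<in> closed_nbhd VH EH h" and w2: "\<forall>u\<in>set hs'. w \<notin> closed_nbhd VH EH u"
    using H(4) by blast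
  have wV: "w \<in> VH" using cn_sub[OF H(2)] w1 by blast
  have xV: "set xs \<subseteq> VG \<times> VH" using xs unfolding legal_def lex_vertices_def by simp
  have hsV: "set hs' \<subseteq> VH" using H(1) unfolding legal_def by simp
  have irr: "\<not> EG i i" using gG by (simp add: fin_graph_def)
  have inN: "(i,w) \<in> closed_nbhd (lex_vertices VG VH) (lex_edges EG VH EH) (i,h)"
    using lex_nb[OF gG i H(2)] wV w1 i by simp
  have notD: "(i,w) \<notin> closed_nbhd (lex_vertices VG VH) (lex_edges EG VH EH) u"
    if u: "u \<in> set (xs @ map (Pair i) hs')" for u
  proof
    assume a: "(i,w) \<in> closed_nbhd (lex_vertices VG VH) (lex_edges EG VH EH) u"
    show False
    proof (cases "u \<in> set xs")
      case True
      then have uV: "fst u \<in> VG" "snd u \<in> VH" using xV by auto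
      have a': "(i,w) \<in> closed_nbhd (lex_vertices VG VH) (lex_edges EG VH EH) (fst u, snd u)" using a by simp
      have "EG (fst u) (fst (i,w)) \<or> (fst (i,w) = fst u)" using a' lex_nb[OF gG uV, of "(i,w)" EH] by blast
      then have "EG (fst u) i \<or> (i = fst u)" by simp
      then show False using nx True by auto
    next
      case False
      then obtain h' where h': "h' \<in> set hs'" "u = (i,h')" using u by auto
      have h'V: "h' \<in> VH" using hsV h'(1) by blast
      have "(i,w) \<in> closed_nbhd (lex_vertices VG VH) (lex_edges EG VH EH) (i,h')" using a h'(2) by simp
      then have "EG i (fst (i,w)) \<or> (fst (i,w) = i \<and> snd (i,w) \<in> closed_nbhd VH EH h')"
        using lex_nb[OF gG i h'V, of "(i,w)" EH] by blast
      then have "EG i i \<or> w \<in> closed_nbhd VH EH h'" by simp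
      then show False using irr w2 h'(1) by blast
    qed
  qed
  have "(i,h) \<notin> set (xs @ map (Pair i) hs')" using nx H(3) by auto
  moreover have "(i,h) \<in> lex_vertices VG VH" using i H(2) by (simp add: lex_vertices_def)
  ultimately have "legal (lex_vertices VG VH) (lex_edges EG VH EH) ((xs @ map (Pair i) hs') @ [(i,h)])"
    unfolding legal_snoc using IH inN notD by blast
  then show ?case by simp
qed

lemma blocks_legal:
  assumes gG: "fin_graph VG EG" and hs: "legal VH EH hs"
    and xs: "legal (lex_vertices VG VH) (lex_edges EG VH EH) xs"
    and isV: "set is \<subseteq> VG" and dis: "distinct is"
    and nx: "\<forall>i\<in>set is. \<forall>x\<in>set xs. fst x \<noteq> i \<and> \<not> EG (fst x) i"
    and ni: "\<forall>i\<in>set is. \<forall>i'\<in>set is. \<not> EG i' i"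
  shows "legal (lex_vertices VG VH) (lex_edges EG VH EH) (xs @ blocks is hs)"
  using isV dis nx ni
proof (induction "is" rule: rev_induct)
  case Nil
  then show ?case using xs by (simp add: blocks_def)
next
  case (snoc i is')
  have IH: "legal (lex_vertices VG VH) (lex_edges EG VH EH) (xs @ blocks is' hs)"
    using snoc.IH snoc.prems by auto
  have iV: "i \<in> VG" using snoc.prems(1) by simp
  have "\<forall>x\<in>set (xs @ blocks is' hs). fst x \<noteq> i \<and> \<not> EG (fst x) i"
    using snoc.prems(2,3,4) by (auto simp: set_blocks)
  from block_legal[OF gG hs IH iV this]
  show ?case by (simp add: blocks_snoc)
qed

lemma dom_cover:
  assumes gG: "fin_graph VG EG" and VGIK: "VG = I \<union> K" and nbI: "\<forall>k\<in>K. \<exists>i\<in>I. EG k i"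
    and hsV: "set hs \<subseteq> VH" and hsD: "(\<Union>h\<in>set hs. closed_nbhd VH EH h) = VH" and hne: "hs \<noteq> []"
    and sub: "I \<times> set hs \<subseteq> set S" and SV: "set S \<subseteq> VG \<times> VH"
  shows "(\<Union>u\<in>set S. closed_nbhd (lex_vertices VG VH) (lex_edges EG VH EH) u) = lex_vertices VG VH"
proof
  show "(\<Union>u\<in>set S. closed_nbhd (lex_vertices VG VH) (lex_edges EG VH EH) u) \<subseteq> lex_vertices VG VH"
    using SV cn_sub[of _ "lex_vertices VG VH" "lex_edges EG VH EH"] unfolding lex_vertices_def by blast
next
  show "lex_vertices VG VH \<subseteq> (\<Union>u\<in>set S. closed_nbhd (lex_vertices VG VH) (lex_edges EG VH EH) u)"
  proof
    fix p assume p: "p \<in> lex_vertices VG VH"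
    obtain g h' where gh: "p = (g,h')" "g \<in> VG" "h' \<in> VH" using p unfolding lex_vertices_def by auto
    have EGV: "EG x y \<Longrightarrow> x \<in> VG \<and> y \<in> VG" for x y using gG by (simp add: fin_graph_def)
    have sym: "EG x y \<Longrightarrow> EG y x" for x y using gG by (simp add: fin_graph_def)
    show "p \<in> (\<Union>u\<in>set S. closed_nbhd (lex_vertices VG VH) (lex_edges EG VH EH) u)"
    proof (cases "g \<in> I")
      case True
      obtain h where h: "h \<in> set hs" "h' \<in> closed_nbhd VH EH h" using hsD gh(3) by blast
      have "(g,h) \<in> set S" using sub True h(1) by blast
      moreover have "p \<in> closed_nbhd (lex_vertices VG VH) (lex_edges EG VH EH) (g,h)"
        using lex_nb[OF gG gh(2), of h VH p EH] hsV h gh by auto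
      ultimately show ?thesis by blast
    next
      case False
      then have gK: "g \<in> K" using VGIK gh(2) by blast
      obtain i where i: "i \<in> I" "EG g i" using nbI gK by blast
      obtain h where h: "h \<in> set hs" using hne by (cases hs) auto
      have "(i,h) \<in> set S" using sub i(1) h by blast
      moreover have "p \<in> closed_nbhd (lex_vertices VG VH) (lex_edges EG VH EH) (i,h)"
      proof -
        have iV: "i \<in> VG" using EGV[OF i(2)] by simp
        have hV: "h \<in> VH" using hsV h by blast
        have "p \<in> VG \<times> VH" using gh by simp
        moreover have "EG i (fst p)" using sym[OF i(2)] gh(1) by simp
        ultimately show ?thesis using lex_nb[OF gG iV hV, of p EH] by blast
      qed
      ultimately show ?thesis by blast
    qed
  qed
qed


theorem corollary3:
  fixes VG :: "'a set" and EG :: "'a \<Rightarrow> 'a \<Rightarrow> bool"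
    and VH :: "'b set" and EH :: "'b \<Rightarrow> 'b \<Rightarrow> bool"
    and I K :: "'a set"
  assumes "fin_graph VG EG" and "fin_graph VH EH" and "VH \<noteq> {}"
    and "VG = I \<union> K" and "I \<inter> K = {}"
    and "clique VG EG K" and "indep_set VG EG I"
    and "card I = alpha VG EG"
  shows "grundy_dom_num (lex_vertices VG VH) (lex_edges EG VH EH)
           = card I * grundy_dom_num VH EH + split_n VG EG I K"
proof -
  note gG = assms(1) and gH = assms(2) and neH = assms(3) and VGIK = assms(4) and disj = assms(5)
    and cl = assms(6) and ind = assms(7) and cardI = assms(8)
  have finVG: "finite VG" using gG by (simp add: fin_graph_def)
  have finVH: "finite VH" using gH by (simp add: fin_graph_def)
  have finI: "finite I" using finVG VGIK by simp
  have EGV: "EG x y \<Longrightarrow> x \<in> VG \<and> y \<in> VG" for x y using gG by (simp add: fin_graph_def)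
  have sym: "EG x y \<Longrightarrow> EG y x" for x y using gG by (simp add: fin_graph_def)
  have irr: "\<not> EG x x" for x using gG by (simp add: fin_graph_def)
  have Iind: "i \<in> I \<Longrightarrow> i' \<in> I \<Longrightarrow> \<not> EG i i'" for i i' using ind by (simp add: indep_set_def)
  have IV: "I \<subseteq> VG" using VGIK by simp
  have KV: "K \<subseteq> VG" using VGIK by simp
  have nbI: "\<forall>k\<in>K. \<exists>i\<in>I. EG k i"
  proof (rule ccontr)
    assume "\<not> (\<forall>k\<in>K. \<exists>i\<in>I. EG k i)"
    then obtain k where k: "k \<in> K" "\<forall>i\<in>I. \<not> EG k i" by blast
    have kI: "k \<notin> I" using k(1) disj by blast
    have "indep_set VG EG (insert k I)"
      unfolding indep_set_def
    proof (intro conjI ballI)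
      show "insert k I \<subseteq> VG" using k(1) KV IV by blast
    next
      fix x y assume x: "x \<in> insert k I" and y: "y \<in> insert k I"
      show "\<not> EG x y"
      proof (cases "x = k")
        case True
        then show ?thesis using y k(2) irr by auto
      next
        case False
        then have xI: "x \<in> I" using x by simp
        show ?thesis
        proof (cases "y = k")
          case True
          then show ?thesis using xI k(2) sym by blast
        next
          case False
          then show ?thesis using xI y Iind by simp
        qed
      qed
    qed
    then have m: "card (insert k I) \<in> {card S | S. indep_set VG EG S}" by blast
    have "{card S | S. indep_set VG EG S} \<subseteq> card ` Pow VG" by (auto simp: indep_set_def)
    then have "finite {card S | S. indep_set VG EG S}" using finVG finite_subset by blast
    then have "card (insert k I) \<le> alpha VG EG" unfolding alpha_def using m by (rule Max_ge)
    then show False using cardI kI finI by simp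
  qed
  obtain hs where hs: "grundy_dom_seq VH EH hs" "length hs = grundy_dom_num VH EH"
    using gdn_props(2)[OF finVH] by blast
  have hsL: "legal VH EH hs" and hsD: "(\<Union>h\<in>set hs. closed_nbhd VH EH h) = VH"
    using hs(1) unfolding grundy_iff by auto
  have hsV: "set hs \<subseteq> VH" using hsL by (simp add: legal_def)
  have hne: "hs \<noteq> []" using hsD neH by auto
  have finP: "finite (lex_vertices VG VH)" using lex_finite[OF gG gH] .
  have upper: "grundy_dom_num (lex_vertices VG VH) (lex_edges EG VH EH)
           \<le> card I * grundy_dom_num VH EH + split_n VG EG I K"
  proof -
    obtain S where S: "grundy_dom_seq (lex_vertices VG VH) (lex_edges EG VH EH) S"
      "length S = grundy_dom_num (lex_vertices VG VH) (lex_edges EG VH EH)"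
      using gdn_props(2)[OF finP] by blast
    have "legal (lex_vertices VG VH) (lex_edges EG VH EH) S" using S(1) unfolding grundy_iff by auto
    then interpret upb VG EG VH EH I K S
      using gG gH neH VGIK disj cl ind nbI by unfold_locales
    show ?thesis using len_bound S(2) by simp
  qed
  obtain isl where isl: "set isl = I" "distinct isl" using finite_distinct_list[OF finI] by blast
  have lower: "card I * grundy_dom_num VH EH + split_n VG EG I K
     \<le> grundy_dom_num (lex_vertices VG VH) (lex_edges EG VH EH)"
  proof (cases "split_n VG EG I K = 0")
    case True
    define S0 where "S0 = blocks isl hs"
    have "legal (lex_vertices VG VH) (lex_edges EG VH EH) ([] @ blocks isl hs)"
      by (rule blocks_legal[OF gG hsL legal_Nil]) (use isl IV Iind in auto)
    then have L: "legal (lex_vertices VG VH) (lex_edges EG VH EH) S0" using S0_def by simp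
    have sS: "set S0 = I \<times> set hs" using S0_def isl by (simp add: set_blocks)
    have "(\<Union>u\<in>set S0. closed_nbhd (lex_vertices VG VH) (lex_edges EG VH EH) u) = lex_vertices VG VH"
      by (rule dom_cover[OF gG VGIK nbI hsV hsD hne]) (use sS IV hsV in auto)
    then have "grundy_dom_seq (lex_vertices VG VH) (lex_edges EG VH EH) S0" using L grundy_iff by blast
    then have "length S0 \<le> grundy_dom_num (lex_vertices VG VH) (lex_edges EG VH EH)"
      using gdn_props(1)[OF finP] by blast
    moreover have "length S0 = card I * grundy_dom_num VH EH"
      using S0_def isl hs(2) distinct_card[OF isl(2)] by (simp add: length_blocks)
    ultimately show ?thesis using True by simp
  next
    case False
    then have sn: "split_n VG EG I K = 1" by (simp add: split_n_def split: if_splits)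
    obtain v w where vw: "v \<in> K" "w \<in> K" "open_nbhd VG EG v \<inter> open_nbhd VG EG w \<inter> I = {}"
      using False by (auto simp: split_n_def split: if_splits)
    have vw_ne: "v \<noteq> w"
    proof
      assume "v = w"
      obtain i where i: "i \<in> I" "EG v i" using nbI vw(1) by blast
      have "i \<in> open_nbhd VG EG v" using i EGV by (simp add: open_nbhd_def)
      then show False using vw(3) \<open>v = w\<close> i(1) by blast
    qed
    have Evw: "EG v w" using cl vw vw_ne by (simp add: clique_def)
    define B where "B = {b \<in> I. EG w b}"
    have BI: "B \<subseteq> I" using B_def by blast
    have finB: "finite B" using finI BI finite_subset by blast
    obtain bsl where bsl: "set bsl = B" "distinct bsl" using finite_distinct_list[OF finB] by blast
    obtain asl where asl: "set asl = I - B" "distinct asl" using finite_distinct_list[of "I - B"] finI by blast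
    define h0 where "h0 = hd hs"
    have h0: "h0 \<in> set hs" using hne h0_def by simp
    have h0V: "h0 \<in> VH" using h0 hsV by blast
    have vV: "v \<in> VG" and wV: "w \<in> VG" using vw KV by auto
    have "legal (lex_vertices VG VH) (lex_edges EG VH EH) ([] @ blocks asl hs)"
      by (rule blocks_legal[OF gG hsL legal_Nil]) (use asl IV Iind in auto)
    then have L1: "legal (lex_vertices VG VH) (lex_edges EG VH EH) (blocks asl hs)" by simp
    have s1: "set (blocks asl hs) = (I - B) \<times> set hs" using asl by (simp add: set_blocks)
    have L2: "legal (lex_vertices VG VH) (lex_edges EG VH EH) (blocks asl hs @ [(v,h0)])"
      unfolding legal_snoc
    proof (intro conjI L1)
      show "(v,h0) \<in> lex_vertices VG VH" using vV h0V by (simp add: lex_vertices_def)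
      show "(v,h0) \<notin> set (blocks asl hs)" using s1 vw(1) disj by auto
      have inN: "(w,h0) \<in> closed_nbhd (lex_vertices VG VH) (lex_edges EG VH EH) (v,h0)"
        using lex_nb[OF gG vV h0V, of "(w,h0)" EH] wV h0V Evw by simp
      have notN: "(w,h0) \<notin> closed_nbhd (lex_vertices VG VH) (lex_edges EG VH EH) u"
        if u: "u \<in> set (blocks asl hs)" for u
      proof
        assume a: "(w,h0) \<in> closed_nbhd (lex_vertices VG VH) (lex_edges EG VH EH) u"
        obtain a0 h where ah: "u = (a0,h)" "a0 \<in> I - B" "h \<in> set hs" using u s1 by auto
        have a0V: "a0 \<in> VG" using ah(2) IV by blast
        have hV: "h \<in> VH" using ah(3) hsV by blast
        have "EG a0 (fst (w,h0)) \<or> fst (w,h0) = a0"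
          using a ah(1) lex_nb[OF gG a0V hV, of "(w,h0)" EH] by blast
        then have "EG a0 w \<or> w = a0" by simp
        then show False
        proof
          assume "EG a0 w"
          then have "a0 \<in> B" using sym ah(2) B_def by auto
          then show False using ah(2) by simp
        next
          assume "w = a0"
          then show False using vw(2) ah(2) disj by blast
        qed
      qed
      show "closed_nbhd (lex_vertices VG VH) (lex_edges EG VH EH) (v,h0)
          - (\<Union>u\<in>set (blocks asl hs). closed_nbhd (lex_vertices VG VH) (lex_edges EG VH EH) u) \<noteq> {}"
        using inN notN by blast
    qed
    define S0 where "S0 = (blocks asl hs @ [(v,h0)]) @ blocks bsl hs"
    have nx: "\<forall>b\<in>set bsl. \<forall>x\<in>set (blocks asl hs @ [(v,h0)]). fst x \<noteq> b \<and> \<not> EG (fst x) b"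
    proof (intro ballI)
      fix b x assume b: "b \<in> set bsl" and x: "x \<in> set (blocks asl hs @ [(v,h0)])"
      have bB: "b \<in> B" using b bsl by simp
      then have bI: "b \<in> I" and wb: "EG w b" using B_def by auto
      show "fst x \<noteq> b \<and> \<not> EG (fst x) b"
      proof (cases "x = (v,h0)")
        case True
        have "v \<noteq> b" using vw(1) bI disj by blast
        moreover have "\<not> EG v b"
        proof
          assume "EG v b"
          then have "b \<in> open_nbhd VG EG v \<inter> open_nbhd VG EG w \<inter> I"
            using wb bI EGV by (simp add: open_nbhd_def)
          then show False using vw(3) by blast
        qed
        ultimately show ?thesis using True by simp
      next
        case False
        then have "fst x \<in> I - B" using x s1 by auto
        then show ?thesis using bB bI Iind by auto
      qed
    qed
    have bsInd: "\<forall>i\<in>set bsl. \<forall>i'\<in>set bsl. \<not> EG i' i"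
    proof (intro ballI)
      fix i i' assume "i \<in> set bsl" "i' \<in> set bsl"
      then have "i \<in> I" "i' \<in> I" using bsl BI by auto
      then show "\<not> EG i' i" using Iind by blast
    qed
    have bsV: "set bsl \<subseteq> VG" using bsl BI IV by auto
    have "legal (lex_vertices VG VH) (lex_edges EG VH EH) S0"
      unfolding S0_def by (rule blocks_legal[OF gG hsL L2 bsV bsl(2) nx bsInd])
    moreover have sS: "set S0 = ((I - B) \<times> set hs) \<union> {(v,h0)} \<union> (B \<times> set hs)"
      using S0_def s1 bsl by (auto simp: set_blocks)
    have "(\<Union>u\<in>set S0. closed_nbhd (lex_vertices VG VH) (lex_edges EG VH EH) u) = lex_vertices VG VH"
      by (rule dom_cover[OF gG VGIK nbI hsV hsD hne]) (use sS IV hsV vV h0V BI in auto)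
    ultimately have "grundy_dom_seq (lex_vertices VG VH) (lex_edges EG VH EH) S0" using grundy_iff by blast
    then have "length S0 \<le> grundy_dom_num (lex_vertices VG VH) (lex_edges EG VH EH)"
      using gdn_props(1)[OF finP] by blast
    moreover have "length S0 = card I * grundy_dom_num VH EH + 1"
    proof -
      have "length S0 = card (I - B) * length hs + 1 + card B * length hs"
        using S0_def distinct_card[OF asl(2)] distinct_card[OF bsl(2)] asl bsl by (simp add: length_blocks)
      moreover have "card (I - B) + card B = card I"
        using card_Diff_subset[OF finB BI] card_mono[OF finI BI] by simp
      moreover have "card (I - B) * length hs + card B * length hs = card I * length hs"
        using \<open>card (I - B) + card B = card I\<close> add_mult_distrib by metis
      ultimately show ?thesis using hs(2) by simp
    qed
    ultimately show ?thesis using sn by simp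
  qed
  show ?thesis using upper lower by simp
qed

end
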